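(* Let $\mathcal{H}$ be a real Hilbert space, suppose $B\colon \mathcal{H}\to\mathcal{H}$ is monotone and $\rho\geq 0$. Then the operator $B':=B-\rho I$ is $L'$-Lipschitz, where $L'=L+\rho$ if $B$ is $L$-Lipschitz; $L'=L-\rho$ if $B$ is $1/L$-cocoercive and $\rho\leq\frac{L}{2}$; and $L'=\rho$ if $B$ is $1/L$-cocoercive and $\rho>\frac{L}{2}$.
   Context: $B$ is $1/L$-cocoercive if $\langle x-y,B(x)-B(y)\rangle\geq\frac1L\|B(x)-B(y)\|^2$ for all $x,y\in\mathcal{H}$. $I$ is the identity operator. *)

theory Defs
  imports "HOL-Analysis.Analysis"
begin

definition monotone_op :: "('a::real_inner \<Rightarrow> 'a) \<Rightarrow> bool" where
  "monotone_op B \<longleftrightarrow> (\<forall>x y. inner (x - y) (B x - B y) \<ge> 0)"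

definition cocoercive :: "real \<Rightarrow> ('a::real_inner \<Rightarrow> 'a) \<Rightarrow> bool" where
  "cocoercive L B \<longleftrightarrow> (\<forall>x y. inner (x - y) (B x - B y) \<ge> (1 / L) * (norm (B x - B y))\<^sup>2)"

end

theory Submission
  imports Defs
begin

lemma sq_expand:
  fixes u v :: "'a::real_inner"
  shows "(norm (v - r *\<^sub>R u))\<^sup>2 = (norm v)\<^sup>2 - 2 * r * inner u v + r\<^sup>2 * (norm u)\<^sup>2"
proof -
  have "inner (v - r *\<^sub>R u) (v - r *\<^sub>R u) = inner v v - 2 * r * inner u v + r\<^sup>2 * inner u u"
    by (simp add: inner_commute[of v u] power2_eq_square algebra_simps)
  thus ?thesis by (simp only: power2_norm_eq_inner)
qed

lemma coco_bound:
  fixes u v :: "'a::real_inner"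
  assumes L: "L > 0" and c: "inner u v \<ge> (1 / L) * (norm v)\<^sup>2" and r: "r \<ge> 0"
  shows "(norm (v - r *\<^sub>R u))\<^sup>2 \<le> (if r \<le> L/2 then (L - r)\<^sup>2 else r\<^sup>2) * (norm u)\<^sup>2"
proof -
  have cs: "inner u v \<le> norm u * norm v" using norm_cauchy_schwarz by blast
  have bL: "norm v \<le> L * norm u"
  proof (cases "norm v = 0")
    case True then show ?thesis using L by simp
  next
    case False
    hence pos: "norm v > 0" by simp
    have "(1/L) * (norm v)\<^sup>2 \<le> norm u * norm v" using c cs by linarith
    hence "(norm v)\<^sup>2 \<le> L * (norm u * norm v)" using L by (simp add: field_simps)
    hence "norm v * norm v \<le> (L * norm u) * norm v" by (simp add: power2_eq_square algebra_simps)
    thus ?thesis using pos by simp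
  qed
  have e: "(norm (v - r *\<^sub>R u))\<^sup>2 \<le> (1 - 2*r/L) * (norm v)\<^sup>2 + r\<^sup>2 * (norm u)\<^sup>2"
  proof -
    have "2 * r * ((1 / L) * (norm v)\<^sup>2) \<le> 2 * r * inner u v" using c r by (intro mult_left_mono) auto
    hence "(norm v)\<^sup>2 - 2*r*inner u v + r\<^sup>2*(norm u)\<^sup>2 \<le> (norm v)\<^sup>2 - 2*r*((1/L)*(norm v)\<^sup>2) + r\<^sup>2*(norm u)\<^sup>2"
      by (rule add_right_mono[OF diff_left_mono])
    moreover have "(1 - 2*r/L) * (norm v)\<^sup>2 = (norm v)\<^sup>2 - 2 * r * ((1 / L) * (norm v)\<^sup>2)"
      by (simp add: algebra_simps)
    ultimately show ?thesis by (simp only: sq_expand)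
  qed
  have b2: "(norm v)\<^sup>2 \<le> L\<^sup>2 * (norm u)\<^sup>2"
  proof -
    have "(norm v)\<^sup>2 \<le> (L * norm u)\<^sup>2" by (rule power_mono[OF bL]) simp
    thus ?thesis by (simp only: power_mult_distrib)
  qed
  show ?thesis
  proof (cases "r \<le> L/2")
    case True
    hence "0 \<le> 1 - 2*r/L" using L by (simp add: field_simps)
    hence "(1 - 2*r/L) * (norm v)\<^sup>2 \<le> (1 - 2*r/L) * (L\<^sup>2 * (norm u)\<^sup>2)" by (rule mult_left_mono[OF b2])
    also have "\<dots> = (L\<^sup>2 - 2*r*L) * (norm u)\<^sup>2" using L by (simp add: field_simps power2_eq_square)
    finally have f: "(1 - 2*r/L) * (norm v)\<^sup>2 \<le> (L\<^sup>2 - 2*r*L) * (norm u)\<^sup>2" .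
    have g: "(L - r)\<^sup>2 * (norm u)\<^sup>2 = (L\<^sup>2 - 2*r*L) * (norm u)\<^sup>2 + r\<^sup>2 * (norm u)\<^sup>2"
      by (simp add: power2_eq_square algebra_simps)
    have "(norm (v - r *\<^sub>R u))\<^sup>2 \<le> (L - r)\<^sup>2 * (norm u)\<^sup>2" using e f g by linarith
    thus ?thesis using True by simp
  next
    case False
    hence "1 - 2*r/L < 0" using L by (simp add: field_simps)
    hence "(1 - 2*r/L) * (norm v)\<^sup>2 \<le> 0" by (simp add: mult_nonpos_nonneg)
    hence "(norm (v - r *\<^sub>R u))\<^sup>2 \<le> r\<^sup>2 * (norm u)\<^sup>2" using e by linarith
    thus ?thesis using False by simp
  qed
qed

lemma sq_to_lip:
  assumes "K \<ge> 0" "(n::real) \<ge> 0" "m \<ge> 0" "n\<^sup>2 \<le> K\<^sup>2 * m\<^sup>2"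
  shows "n \<le> K * m"
proof -
  have "n\<^sup>2 \<le> (K*m)\<^sup>2" using assms by (simp add: power_mult_distrib)
  thus ?thesis using assms by (meson mult_nonneg_nonneg power2_le_imp_le)
qed

theorem lemma4p1:
  fixes B :: "'a::{real_inner, complete_space} \<Rightarrow> 'a" and L \<rho> :: real
  assumes "monotone_op B" and "\<rho> \<ge> 0"
  shows "(lipschitz_on L UNIV B \<longrightarrow> lipschitz_on (L + \<rho>) UNIV (\<lambda>x. B x - \<rho> *\<^sub>R x))
       \<and> (L > 0 \<and> cocoercive L B \<and> \<rho> \<le> L / 2 \<longrightarrow> lipschitz_on (L - \<rho>) UNIV (\<lambda>x. B x - \<rho> *\<^sub>R x))
       \<and> (L > 0 \<and> cocoercive L B \<and> \<rho> > L / 2 \<longrightarrow> lipschitz_on \<rho> UNIV (\<lambda>x. B x - \<rho> *\<^sub>R x))"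
proof (intro conjI impI)
  assume h: "lipschitz_on L UNIV B"
  show "lipschitz_on (L + \<rho>) UNIV (\<lambda>x. B x - \<rho> *\<^sub>R x)"
  proof -
    have "(\<bar>\<rho>\<bar> * 1)-lipschitz_on UNIV (\<lambda>x::'a. \<rho> *\<^sub>R x)"
      by (rule lipschitz_on_cmult[OF lipschitz_on_id])
    hence "\<rho>-lipschitz_on UNIV (\<lambda>x::'a. \<rho> *\<^sub>R x)" using assms(2) by simp
    thus ?thesis by (rule lipschitz_on_diff[OF h])
  qed
next
  assume h: "L > 0 \<and> cocoercive L B \<and> \<rho> \<le> L / 2"
  show "lipschitz_on (L - \<rho>) UNIV (\<lambda>x. B x - \<rho> *\<^sub>R x)"
    unfolding lipschitz_on_def
  proof (intro conjI ballI)
    show "0 \<le> L - \<rho>" using h by simp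
    fix x y :: 'a
    have c: "inner (x - y) (B x - B y) \<ge> (1 / L) * (norm (B x - B y))\<^sup>2"
      using h unfolding cocoercive_def by blast
    have eq: "B x - \<rho> *\<^sub>R x - (B y - \<rho> *\<^sub>R y) = (B x - B y) - \<rho> *\<^sub>R (x - y)"
      by (simp add: algebra_simps)
    have "(norm ((B x - B y) - \<rho> *\<^sub>R (x - y)))\<^sup>2 \<le> (L - \<rho>)\<^sup>2 * (norm (x - y))\<^sup>2" (is ?sq)
      using coco_bound[OF _ c assms(2)] h by simp
    have "norm ((B x - B y) - \<rho> *\<^sub>R (x - y)) \<le> (L - \<rho>) * norm (x - y)"
      by (rule sq_to_lip[OF _ _ _ \<open>?sq\<close>]) (use h in auto)
    thus "dist (B x - \<rho> *\<^sub>R x) (B y - \<rho> *\<^sub>R y) \<le> (L - \<rho>) * dist x y"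
      by (simp add: dist_norm eq)
  qed
next
  assume h: "L > 0 \<and> cocoercive L B \<and> \<rho> > L / 2"
  show "lipschitz_on \<rho> UNIV (\<lambda>x. B x - \<rho> *\<^sub>R x)"
    unfolding lipschitz_on_def
  proof (intro conjI ballI)
    show "0 \<le> \<rho>" using assms(2) .
    fix x y :: 'a
    have c: "inner (x - y) (B x - B y) \<ge> (1 / L) * (norm (B x - B y))\<^sup>2"
      using h unfolding cocoercive_def by blast
    have eq: "B x - \<rho> *\<^sub>R x - (B y - \<rho> *\<^sub>R y) = (B x - B y) - \<rho> *\<^sub>R (x - y)"
      by (simp add: algebra_simps)
    have "(norm ((B x - B y) - \<rho> *\<^sub>R (x - y)))\<^sup>2 \<le> \<rho>\<^sup>2 * (norm (x - y))\<^sup>2" (is ?sq)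
      using coco_bound[OF _ c assms(2)] h by simp
    have "norm ((B x - B y) - \<rho> *\<^sub>R (x - y)) \<le> \<rho> * norm (x - y)"
      by (rule sq_to_lip[OF _ _ _ \<open>?sq\<close>]) (use assms(2) in auto)
    thus "dist (B x - \<rho> *\<^sub>R x) (B y - \<rho> *\<^sub>R y) \<le> \<rho> * dist x y"
      by (simp add: dist_norm eq)
  qed
qed

end
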